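(* Let $n, m, k, l, s, t$ be positive integers with $\min\{m,n\}\geq (t+1)(k-t+1)$, $k\geq l\geq t+1\geq 4$ and $t+3\leq s \leq k+1$. Then \[(t+1)(k-s+2)(m-l+t-s+2)-(s-1-t)\big((m-l+t-s+1)(n-k-1)-(k-s+2)(l-t)\big)<0.\] *)

theory Defs
  imports Main
begin

end

theory Submission
  imports Defs
begin

theorem lemma3p2:
  fixes n m k l s t :: int
  assumes "n > 0" and "m > 0" and "k > 0" and "l > 0" and "s > 0" and "t > 0"
    and "min m n \<ge> (t + 1) * (k - t + 1)"
    and "k \<ge> l" and "l \<ge> t + 1" and "t + 1 \<ge> 4"
    and "t + 3 \<le> s" and "s \<le> k + 1"
  shows "(t + 1) * (k - s + 2) * (m - l + t - s + 2)
           - (s - 1 - t) * ((m - l + t - s + 1) * (n - k - 1) - (k - s + 2) * (l - t)) < 0"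
proof -
  define a where "a = s - 1 - t"
  define b where "b = k - s + 2"
  define M where "M = m - l + t - s + 1"
  define N where "N = n - k - 1"
  define X where "X = a + b - 1"
  have a2: "a \<ge> 2" and b1: "b \<ge> 1" and t3: "t \<ge> 3" using assms by (auto simp: a_def b_def)
  have kab: "k - t + 1 = a + b" by (simp add: a_def b_def)
  have mm: "m \<ge> (t+1)*(a+b)" and nn: "n \<ge> (t+1)*(a+b)" using assms(7) kab by auto
  have tab: "(t+1)*(a+b) = t*(a+b) + (a+b)" by (simp add: algebra_simps)
  have tX: "t*(a+b) = t*X + t" by (simp add: X_def algebra_simps)
  have N1: "N \<ge> t * X" using nn tab tX by (simp add: N_def a_def b_def)
  have M1: "M \<ge> (t-2)*a + (t-1)*(b-1) + a + b" using mm assms(8) tab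
    by (simp add: M_def a_def b_def algebra_simps)
  have "(t-2)*a \<ge> 1*a" using t3 a2 by (intro mult_right_mono) auto
  moreover have "(t-1)*(b-1) \<ge> 0" using t3 b1 by simp
  ultimately have Mb: "M \<ge> 2*a + b" using M1 by linarith
  have lt: "l - t \<le> X" using assms(8) by (simp add: X_def a_def b_def)
  have X1: "X \<ge> b + 1" using a2 by (simp add: X_def)
  have S1: "a*M*N \<ge> a*M*(t*X)" using N1 a2 Mb b1 by (intro mult_left_mono) auto
  have S2: "a*b*(l-t) \<le> a*b*X" using lt a2 b1 by (intro mult_left_mono) auto
  have S3: "b*(a*X) \<le> M*(a*X)" using Mb a2 X1 b1 by (intro mult_right_mono) auto
  have S4: "a*X \<ge> 2*(b+1)" using a2 X1 b1 by (intro mult_mono) auto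
  have S5: "(t-1)*M*(a*X) \<ge> (t-1)*M*(2*(b+1))" using S4 t3 Mb a2 b1 by (intro mult_left_mono) auto
  have S6: "(t-1)*2*((b+1)*M) \<ge> (t+1)*((b+1)*M)" using t3 Mb a2 b1 by (intro mult_right_mono) auto
  have S7: "(t+1)*((b+1)*M) > (t+1)*(b*(M+1))"
  proof -
    have "(b+1)*M > b*(M+1)" using Mb a2 by (simp add: algebra_simps)
    then show ?thesis using t3 by simp
  qed
  have G: "(t+1)*b*(M+1) - a*(M*N - b*(l-t)) < 0"
  proof -
    have e1: "a*(M*N - b*(l-t)) = a*M*N - a*b*(l-t)" by (simp add: algebra_simps)
    have e2: "a*M*(t*X) = M*(a*X) + (t-1)*M*(a*X)" by (simp add: algebra_simps)
    have e3: "(t-1)*M*(2*(b+1)) = (t-1)*2*((b+1)*M)" by (simp add: algebra_simps)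
    have e4: "b*(a*X) = a*b*X" by (simp add: algebra_simps)
    have e5: "(t+1)*b*(M+1) = (t+1)*(b*(M+1))" by (simp add: algebra_simps)
    show ?thesis using S1 S2 S3 S5 S6 S7 e1 e2 e3 e4 e5 by linarith
  qed
  then show ?thesis by (simp add: a_def b_def M_def N_def algebra_simps)
qed

end
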